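(* For any $n\ge1$, $1\le d\le n$ and any $\mathcal{A}\subseteq\{0,1\}^n$, \[ \big(\mathrm{OPT}(\mathsf{Del}(n,d;\mathcal{A}))\big)^{1/2}\le\mathrm{OPT}(\mathsf{Del}(n,d)). \]
   Context: Fourier transform: $\widehat{f}(\mathbf{s})=2^{-n}\sum_{\mathbf{x}\in\{0,1\}^n}f(\mathbf{x})(-1)^{\mathbf{x}\cdot\mathbf{s}}$. $w(\mathbf{x})$ is Hamming weight. $\mathrm{OPT}$ denotes the optimal value of an LP. $\mathsf{Del}(n,d)$: maximize $\sum_{\mathbf{x}}f(\mathbf{x})$ over $f:\{0,1\}^n\to\mathbb{R}$ subject to $f\ge0$, $\widehat f\ge0$, $f(\mathbf{x})=0$ whenever $1\le w(\mathbf{x})\le d-1$, $f(0^n)=1$. $\mathsf{Del}(n,d;\mathcal{A})$: maximize $\sum_{\mathbf{x}}f(\mathbf{x})$ over $f:\{0,1\}^n\to\mathbb{R}$ subject to (D1) $f\ge0$; (D2) $\widehat f\ge 0$; (D3) $f(\mathbf{x})=0$ whenever $1\le w(\mathbf{x})\le d-1$; (D4) $f(0^n)\le\mathrm{OPT}(\mathsf{Del}(n,d))$; (D5) $f(\mathbf{x})\le\sum_{\mathbf{z}}\mathds{1}_{\mathcal{A}}(\mathbf{z})\mathds{1}_{\mathcal{A}}(\mathbf{x}+\mathbf{z})$ for all $\mathbf{x}$ (addition over $\mathbb{F}_2^n$). *)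

theory Defs
  imports Complex_Main "HOL-Library.Indicator_Function"
begin

text \<open>Points of {0,1}^n are encoded as subsets x of {..<n} (the support of the vector).
  Hamming weight = card x, addition over F_2^n = symmetric difference,
  x.s = card (x \<inter> s) (parity).\<close>

definition cube :: "nat \<Rightarrow> nat set set" where
  "cube n = Pow {..<n}"

definition vadd :: "nat set \<Rightarrow> nat set \<Rightarrow> nat set" where
  "vadd x z = (x - z) \<union> (z - x)"

definition fourier :: "nat \<Rightarrow> (nat set \<Rightarrow> real) \<Rightarrow> nat set \<Rightarrow> real" where
  "fourier n f s = (1 / 2 ^ n) * (\<Sum>x\<in>cube n. f x * (-1) ^ card (x \<inter> s))"

definition del_feasible :: "nat \<Rightarrow> nat \<Rightarrow> (nat set \<Rightarrow> real) \<Rightarrow> bool" where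
  "del_feasible n d f \<longleftrightarrow>
     (\<forall>x\<in>cube n. 0 \<le> f x) \<and>
     (\<forall>s\<in>cube n. 0 \<le> fourier n f s) \<and>
     (\<forall>x\<in>cube n. 1 \<le> card x \<and> card x \<le> d - 1 \<longrightarrow> f x = 0) \<and>
     f {} = 1"

definition del_opt :: "nat \<Rightarrow> nat \<Rightarrow> real" where
  "del_opt n d = Sup {\<Sum>x\<in>cube n. f x | f. del_feasible n d f}"

definition delA_feasible :: "nat \<Rightarrow> nat \<Rightarrow> nat set set \<Rightarrow> (nat set \<Rightarrow> real) \<Rightarrow> bool" where
  "delA_feasible n d A f \<longleftrightarrow>
     (\<forall>x\<in>cube n. 0 \<le> f x) \<and>
     (\<forall>s\<in>cube n. 0 \<le> fourier n f s) \<and>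
     (\<forall>x\<in>cube n. 1 \<le> card x \<and> card x \<le> d - 1 \<longrightarrow> f x = 0) \<and>
     f {} \<le> del_opt n d \<and>
     (\<forall>x\<in>cube n. f x \<le> (\<Sum>z\<in>cube n. (indicator A z :: real) * indicator A (vadd x z)))"

definition delA_opt :: "nat \<Rightarrow> nat \<Rightarrow> nat set set \<Rightarrow> real" where
  "delA_opt n d A = Sup {\<Sum>x\<in>cube n. f x | f. delA_feasible n d A f}"

end

theory Submission
  imports Defs
begin

lemma char_sum0:
  fixes n :: nat
  assumes "x \<subseteq> {..<n}" "i \<in> x"
  shows "(\<Sum>s\<in>Pow {..<n}. (-1::real) ^ card (x \<inter> s)) = 0"
proof -
  let ?P0 = "{s\<in>Pow {..<n}. i \<notin> s}"
  let ?P1 = "{s\<in>Pow {..<n}. i \<in> s}"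
  have in_n: "i < n" using assms by auto
  have split: "Pow {..<n} = ?P0 \<union> ?P1" by auto
  have disj: "?P0 \<inter> ?P1 = {}" by auto
  have img: "?P1 = insert i ` ?P0"
  proof
    show "?P1 \<subseteq> insert i ` ?P0"
    proof
      fix s assume "s \<in> ?P1"
      then have "s = insert i (s - {i})" "s - {i} \<in> ?P0" by auto
      then show "s \<in> insert i ` ?P0" by blast
    qed
    show "insert i ` ?P0 \<subseteq> ?P1" using in_n by auto
  qed
  have inj: "inj_on (insert i) ?P0"
    unfolding inj_on_def by (metis (mono_tags, lifting) Diff_insert_absorb mem_Collect_eq)
  have fin0: "finite ?P0" by (rule finite_subset[of _ "Pow {..<n}"]) auto
  have fin1: "finite ?P1" by (rule finite_subset[of _ "Pow {..<n}"]) auto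
  have "(\<Sum>s\<in>?P1. (-1::real) ^ card (x \<inter> s)) = (\<Sum>s\<in>?P0. (-1::real) ^ card (x \<inter> insert i s))"
    unfolding img by (rule sum.reindex_cong[OF inj refl]) simp
  also have "\<dots> = (\<Sum>s\<in>?P0. - ((-1::real) ^ card (x \<inter> s)))"
  proof (rule sum.cong)
    fix s assume s: "s \<in> ?P0"
    have "x \<inter> insert i s = insert i (x \<inter> s)" using assms by auto
    moreover have "i \<notin> x \<inter> s" using s by auto
    moreover have "finite (x \<inter> s)" using s by (auto intro: finite_subset)
    ultimately show "(-1::real) ^ card (x \<inter> insert i s) = - ((-1::real) ^ card (x \<inter> s))"
      by simp
  qed simp
  finally have e: "(\<Sum>s\<in>?P1. (-1::real) ^ card (x \<inter> s)) = - (\<Sum>s\<in>?P0. (-1::real) ^ card (x \<inter> s))"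
    by (simp add: sum_negf)
  have "(\<Sum>s\<in>Pow {..<n}. (-1::real) ^ card (x \<inter> s)) =
        (\<Sum>s\<in>?P0. (-1::real) ^ card (x \<inter> s)) + (\<Sum>s\<in>?P1. (-1::real) ^ card (x \<inter> s))"
    by (subst split, rule sum.union_disjoint[OF fin0 fin1 disj])
  with e show ?thesis by simp
qed

lemma char_sum:
  assumes "x \<in> cube n"
  shows "(\<Sum>s\<in>cube n. (-1::real) ^ card (x \<inter> s)) = (if x = {} then 2 ^ n else 0)"
proof (cases "x = {}")
  case True
  then show ?thesis by (simp add: cube_def card_Pow)
next
  case False
  then obtain i where "i \<in> x" by auto
  then show ?thesis using char_sum0[of x n i] assms False by (simp add: cube_def)
qed

lemma fourier_inv: "(\<Sum>s\<in>cube n. fourier n f s) = f {}"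
proof -
  have "(\<Sum>s\<in>cube n. fourier n f s) = (1 / 2 ^ n) * (\<Sum>s\<in>cube n. \<Sum>x\<in>cube n. f x * (-1) ^ card (x \<inter> s))"
    by (simp add: fourier_def sum_distrib_left)
  also have "(\<Sum>s\<in>cube n. \<Sum>x\<in>cube n. f x * (-1::real) ^ card (x \<inter> s))
      = (\<Sum>x\<in>cube n. f x * (\<Sum>s\<in>cube n. (-1::real) ^ card (x \<inter> s)))"
    by (subst sum.swap) (simp add: sum_distrib_left)
  also have "\<dots> = (\<Sum>x\<in>cube n. f x * (if x = {} then 2 ^ n else 0))"
    by (rule sum.cong) (simp_all add: char_sum)
  also have "\<dots> = f {} * 2 ^ n"
    by (simp add: cube_def if_distrib cong: if_cong)
  finally show ?thesis by simp
qed

lemma sum_le_bound: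
  assumes "\<forall>s\<in>cube n. 0 \<le> fourier n f s"
  shows "(\<Sum>x\<in>cube n. f x) \<le> 2 ^ n * f {}"
proof -
  have "(\<Sum>x\<in>cube n. f x) = 2 ^ n * fourier n f {}"
    by (simp add: fourier_def)
  also have "fourier n f {} \<le> (\<Sum>s\<in>cube n. fourier n f s)"
    by (rule member_le_sum) (use assms in \<open>auto simp: cube_def\<close>)
  finally show ?thesis by (simp add: fourier_inv)
qed

lemma del_bdd: "bdd_above {\<Sum>x\<in>cube n. f x | f. del_feasible n d f}"
  unfolding bdd_above_def
  by (rule exI[of _ "2 ^ n"]) (auto simp: del_feasible_def dest: sum_le_bound)

lemma del_feasible_delta: "del_feasible n d (\<lambda>x. if x = {} then 1 else 0)"
proof -
  have "{} \<in> cube n" by (simp add: cube_def)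
  then have "fourier n (\<lambda>x. if x = {} then 1 else 0) s = 1 / 2 ^ n" for s
  proof -
    have "(\<Sum>x\<in>cube n. (if x = {} then 1 else 0) * (-1::real) ^ card (x \<inter> s))
        = (\<Sum>x\<in>cube n. (if x = {} then 1 else 0))"
      by (rule sum.cong) auto
    also have "\<dots> = 1" using \<open>{} \<in> cube n\<close> by (simp add: cube_def)
    finally show ?thesis by (simp add: fourier_def)
  qed
  then show ?thesis by (simp add: del_feasible_def)
qed

lemma del_opt_nonneg: "0 \<le> del_opt n d"
proof -
  have "(\<Sum>x\<in>cube n. (\<lambda>x. if x = {} then 1 else 0::real) x) \<le> del_opt n d"
    unfolding del_opt_def
    by (rule cSup_upper[OF _ del_bdd]) (use del_feasible_delta in blast)
  moreover have "0 \<le> (\<Sum>x\<in>cube n. (\<lambda>x. if x = {} then 1 else 0::real) x)"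
    by (rule sum_nonneg) simp
  ultimately show ?thesis by linarith
qed

lemma delA_each:
  assumes "delA_feasible n d A f"
  shows "(\<Sum>x\<in>cube n. f x) \<le> del_opt n d * del_opt n d"
proof -
  let ?M = "del_opt n d"
  have f0: "\<forall>x\<in>cube n. 0 \<le> f x" and fh: "\<forall>s\<in>cube n. 0 \<le> fourier n f s"
    and fz: "\<forall>x\<in>cube n. 1 \<le> card x \<and> card x \<le> d - 1 \<longrightarrow> f x = 0"
    and fM: "f {} \<le> ?M"
    using assms by (auto simp: delA_feasible_def)
  have e0: "{} \<in> cube n" by (simp add: cube_def)
  have M0: "0 \<le> ?M" by (rule del_opt_nonneg)
  have nn: "0 \<le> f {}" using f0 e0 by auto
  show ?thesis
  proof (cases "f {} = 0")
    case True
    then have "(\<Sum>x\<in>cube n. f x) \<le> 0" using sum_le_bound[OF fh] by simp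
    then show ?thesis using M0 by (meson mult_nonneg_nonneg order_trans)
  next
    case False
    with nn have pos: "0 < f {}" by simp
    define g where "g = (\<lambda>x. f x / f {})"
    have fg: "fourier n g s = fourier n f s / f {}" for s
      by (simp add: g_def fourier_def sum_divide_distrib mult.commute)
    have gf: "del_feasible n d g"
      unfolding del_feasible_def using f0 fh fz pos
      by (auto simp: fg[unfolded g_def] g_def)
    have "(\<Sum>x\<in>cube n. g x) \<le> ?M"
      unfolding del_opt_def by (rule cSup_upper[OF _ del_bdd]) (use gf in blast)
    moreover have "(\<Sum>x\<in>cube n. f x) = f {} * (\<Sum>x\<in>cube n. g x)"
      using pos by (simp add: g_def sum_divide_distrib[symmetric])
    ultimately have "(\<Sum>x\<in>cube n. f x) \<le> f {} * ?M"
      using pos by (simp add: mult_left_mono)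
    also have "\<dots> \<le> ?M * ?M" using fM M0 by (simp add: mult_right_mono)
    finally show ?thesis .
  qed
qed

theorem mainTheorem4:
  fixes n d :: nat and A :: "nat set set"
  assumes "1 \<le> n" and "1 \<le> d" and "d \<le> n" and "A \<subseteq> cube n"
  shows "sqrt (delA_opt n d A) \<le> del_opt n d"
proof -
  let ?M = "del_opt n d"
  have ne: "{\<Sum>x\<in>cube n. f x | f. delA_feasible n d A f} \<noteq> {}"
  proof -
    have "delA_feasible n d A (\<lambda>x. 0)"
      unfolding delA_feasible_def
      by (auto simp: fourier_def del_opt_nonneg intro!: sum_nonneg)
    then show ?thesis by blast
  qed
  have "delA_opt n d A \<le> ?M * ?M"
    unfolding delA_opt_def
    by (rule cSup_least[OF ne]) (auto intro: delA_each)
  then have "sqrt (delA_opt n d A) \<le> sqrt (?M * ?M)" by (rule real_sqrt_le_mono)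
  also have "\<dots> = ?M" using del_opt_nonneg by simp
  finally show ?thesis .
qed

end
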